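(* Let $(\mu,b)$ be a stable configuration under perfect observability for the objective game $G$. Then for every $\theta\in\operatorname{supp}\mu$, the strategy profile $b(\theta)\in\prod_{i\in N}\Delta(A_i)$ is Pareto efficient with respect to $\pi$.
   Context: Objective game: $G=(N,A,\pi)$ is a finite $n$-player normal-form game, $N=\{1,\dots,n\}$, finite action sets $A_i$, $A=\prod_{i\in N}A_i$, material payoff (fitness) functions $\pi_i:A\to\mathbb{R}$, extended multilinearly to mixed profiles in $\prod_{i}\Delta(A_i)$ (and linearly to correlated strategies in $\Delta(A)$); $\pi=(\pi_1,\dots,\pi_n)$. Preference types: $\Theta=\mathbb{R}^A$ (utility functions on $A$, extended multilinearly to mixed profiles). $\mathcal{M}(\Theta^n)$ is the set of product distributions $\mu=\mu_1\times\dots\times\mu_n$ on $\Theta^n$ with each $\mu_i$ finitely supported; $\operatorname{supp}\mu=\prod_i\operatorname{supp}\mu_i$, $\mu_{-i}(\theta_{-i})=\prod_{j\neq i}\mu_j(\theta_j)$. Mutants: for nonempty $J\subseteq N$, a mutant sub-profile is $\tilde\theta_J\in\prod_{j\in J}(\Theta\setminus\operatorname{supp}\mu_j)$ with shares $\varepsilon=(\varepsilon_j)_{j\in J}\in(0,1)^{|J|}$, $\|\varepsilon\|=\max_j\varepsilon_j$; the post-entry distribution $\tilde\mu^\varepsilon$ has $\tilde\mu^\varepsilon_i=(1-\varepsilon_i)\mu_i+\varepsilon_i\delta_{\tilde\theta_i}$ for $i\in J$ and $\tilde\mu^\varepsilon_i=\mu_i$ otherwise. Perfect observability: for $\mu\in\mathcal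 M(\Theta^n)$, an equilibrium is a map $b:\operatorname{supp}\mu\to\prod_i\Delta(A_i)$ such that for each $\theta$, $b(\theta)$ is a Nash equilibrium of the normal-form game with action sets $A_i$ and payoffs $\theta_1,\dots,\theta_n$; $B_1(\mu)$ is the set of these; $(\mu,b)$ with $b\in B_1(\mu)$ is a configuration. Average fitness of $\theta_i\in\operatorname{supp}\mu_i$: $\Pi_{\theta_i}(\mu;b)=\sum_{\theta'_{-i}\in\operatorname{supp}\mu_{-i}}\mu_{-i}(\theta'_{-i})\pi_i(b(\theta_i,\theta'_{-i}))$. $(\mu,b)$ is balanced if for each $i$ all types in $\operatorname{supp}\mu_i$ have equal average fitness. Focal set: $B_1(\tilde\mu^\varepsilon;b)=\{\tilde b\in B_1(\tilde\mu^\varepsilon):\tilde b(\theta)=b(\theta)\ \forall\theta\in\operatorname{supp}\mu\}$. $(\mu,b)$ is stable if it is balanced and for every nonempty $J\subseteq N$ and every mutant sub-profile $\tilde\theta_J$ there is $\bar\epsilon\in(0,1)$ such that for every $\varepsilon\in(0,1)^{|J|}$ with $\|\varepsilon\|<\bar\epsilon$ and every $\tilde b\in B_1(\tilde\mu^\varepsilon;b)$, either (i) there is $j\in J$ with $\Pi_{\theta_j}(\tilde\mu^\varepsilon;\tilde b)>\Pi_{\tilde\theta_j}(\tilde\mu^\varepsilon;\tilde b)$ for all $\theta_j\in\operatorname{supp}\mu_j$, or (ii) for every $i\in N$ all types in $\operatorname{supp}\tilde\mu^\varepsilon_i$ have equal average fitness under $(\tilde\mu^\varepsilon,\tilde b)$.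 Pareto notions: $\sigma$ Pareto dominates $\sigma'$ if $\pi_i(\sigma)\ge\pi_i(\sigma')$ for all $i$ with strict inequality for some $i$; $\sigma$ is Pareto efficient if no profile in $\prod_i\Delta(A_i)$ Pareto dominates it. *)

theory Defs
  imports Complex_Main "HOL-Library.FuncSet"
begin

(* Players: a finite type 'i (N = UNIV).  Preference types / utility functions:
   functions ('i => 'a) => real, required to vanish off the profile set,
   so that they correspond exactly to elements of R^A. *)

definition profiles :: "('i \<Rightarrow> 'a set) \<Rightarrow> ('i \<Rightarrow> 'a) set" where
  "profiles A = PiE UNIV A"

definition is_mixed :: "'a set \<Rightarrow> ('a \<Rightarrow> real) \<Rightarrow> bool" where
  "is_mixed Ai s \<longleftrightarrow> (\<forall>a. 0 \<le> s a) \<and> (\<forall>a. a \<notin> Ai \<longrightarrow> s a = 0) \<and> sum s Ai = 1"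

definition mixed_profile :: "('i \<Rightarrow> 'a set) \<Rightarrow> ('i \<Rightarrow> 'a \<Rightarrow> real) \<Rightarrow> bool" where
  "mixed_profile A \<sigma> \<longleftrightarrow> (\<forall>i. is_mixed (A i) (\<sigma> i))"

definition mexp :: "('i::finite \<Rightarrow> 'a set) \<Rightarrow> (('i \<Rightarrow> 'a) \<Rightarrow> real) \<Rightarrow> ('i \<Rightarrow> 'a \<Rightarrow> real) \<Rightarrow> real" where
  "mexp A u \<sigma> = (\<Sum>a\<in>profiles A. (\<Prod>i\<in>UNIV. \<sigma> i (a i)) * u a)"

definition nash :: "('i::finite \<Rightarrow> 'a set) \<Rightarrow> ('i \<Rightarrow> ('i \<Rightarrow> 'a) \<Rightarrow> real) \<Rightarrow> ('i \<Rightarrow> 'a \<Rightarrow> real) \<Rightarrow> bool" where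
  "nash A \<theta> \<sigma> \<longleftrightarrow> mixed_profile A \<sigma> \<and>
     (\<forall>i s. is_mixed (A i) s \<longrightarrow> mexp A (\<theta> i) (\<sigma>(i := s)) \<le> mexp A (\<theta> i) \<sigma>)"

definition types :: "('i \<Rightarrow> 'a set) \<Rightarrow> (('i \<Rightarrow> 'a) \<Rightarrow> real) set" where
  "types A = {\<theta>. \<forall>a. a \<notin> profiles A \<longrightarrow> \<theta> a = 0}"

definition supp :: "('t \<Rightarrow> real) \<Rightarrow> 't set" where
  "supp m = {x. 0 < m x}"

definition is_dist :: "('i \<Rightarrow> 'a set) \<Rightarrow> ((('i \<Rightarrow> 'a) \<Rightarrow> real) \<Rightarrow> real) \<Rightarrow> bool" where
  "is_dist A m \<longleftrightarrow> (\<forall>\<theta>. 0 \<le> m \<theta>) \<and> finite (supp m) \<and> supp m \<subseteq> types A \<and> sum m (supp m) = 1"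

(* product distribution mu = mu_1 x ... x mu_n in M(Theta^n), given by its marginals *)
definition pop_dist :: "('i \<Rightarrow> 'a set) \<Rightarrow> ('i \<Rightarrow> (('i \<Rightarrow> 'a) \<Rightarrow> real) \<Rightarrow> real) \<Rightarrow> bool" where
  "pop_dist A \<mu> \<longleftrightarrow> (\<forall>i. is_dist A (\<mu> i))"

definition supp_prof :: "('i \<Rightarrow> 't \<Rightarrow> real) \<Rightarrow> ('i \<Rightarrow> 't) set" where
  "supp_prof \<mu> = PiE UNIV (\<lambda>i. supp (\<mu> i))"

definition eqm :: "('i::finite \<Rightarrow> 'a set) \<Rightarrow> ('i \<Rightarrow> (('i \<Rightarrow> 'a) \<Rightarrow> real) \<Rightarrow> real)
    \<Rightarrow> (('i \<Rightarrow> ('i \<Rightarrow> 'a) \<Rightarrow> real) \<Rightarrow> 'i \<Rightarrow> 'a \<Rightarrow> real) \<Rightarrow> bool" where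
  "eqm A \<mu> b \<longleftrightarrow> (\<forall>\<theta>\<in>supp_prof \<mu>. nash A \<theta> (b \<theta>))"

definition avg_fit :: "('i::finite \<Rightarrow> 'a set) \<Rightarrow> ('i \<Rightarrow> ('i \<Rightarrow> 'a) \<Rightarrow> real)
    \<Rightarrow> ('i \<Rightarrow> (('i \<Rightarrow> 'a) \<Rightarrow> real) \<Rightarrow> real)
    \<Rightarrow> (('i \<Rightarrow> ('i \<Rightarrow> 'a) \<Rightarrow> real) \<Rightarrow> 'i \<Rightarrow> 'a \<Rightarrow> real)
    \<Rightarrow> 'i \<Rightarrow> (('i \<Rightarrow> 'a) \<Rightarrow> real) \<Rightarrow> real" where
  "avg_fit A \<pi> \<mu> b i t =
     (\<Sum>\<theta>'\<in>PiE UNIV (\<lambda>j. if j = i then {t} else supp (\<mu> j)).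
        (\<Prod>j\<in>UNIV - {i}. \<mu> j (\<theta>' j)) * mexp A (\<pi> i) (b \<theta>'))"

definition balanced :: "('i::finite \<Rightarrow> 'a set) \<Rightarrow> ('i \<Rightarrow> ('i \<Rightarrow> 'a) \<Rightarrow> real)
    \<Rightarrow> ('i \<Rightarrow> (('i \<Rightarrow> 'a) \<Rightarrow> real) \<Rightarrow> real)
    \<Rightarrow> (('i \<Rightarrow> ('i \<Rightarrow> 'a) \<Rightarrow> real) \<Rightarrow> 'i \<Rightarrow> 'a \<Rightarrow> real) \<Rightarrow> bool" where
  "balanced A \<pi> \<mu> b \<longleftrightarrow>
     (\<forall>i. \<forall>t\<in>supp (\<mu> i). \<forall>t'\<in>supp (\<mu> i). avg_fit A \<pi> \<mu> b i t = avg_fit A \<pi> \<mu> b i t')"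

definition post_entry :: "('i \<Rightarrow> 't \<Rightarrow> real) \<Rightarrow> 'i set \<Rightarrow> ('i \<Rightarrow> 't) \<Rightarrow> ('i \<Rightarrow> real)
    \<Rightarrow> ('i \<Rightarrow> 't \<Rightarrow> real)" where
  "post_entry \<mu> J mt \<epsilon> =
     (\<lambda>i. if i \<in> J then (\<lambda>\<theta>. (1 - \<epsilon> i) * \<mu> i \<theta> + \<epsilon> i * (if \<theta> = mt i then 1 else 0))
          else \<mu> i)"

definition focal :: "('i::finite \<Rightarrow> 'a set) \<Rightarrow> ('i \<Rightarrow> (('i \<Rightarrow> 'a) \<Rightarrow> real) \<Rightarrow> real)
    \<Rightarrow> (('i \<Rightarrow> ('i \<Rightarrow> 'a) \<Rightarrow> real) \<Rightarrow> 'i \<Rightarrow> 'a \<Rightarrow> real)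
    \<Rightarrow> ('i \<Rightarrow> (('i \<Rightarrow> 'a) \<Rightarrow> real) \<Rightarrow> real)
    \<Rightarrow> (('i \<Rightarrow> ('i \<Rightarrow> 'a) \<Rightarrow> real) \<Rightarrow> 'i \<Rightarrow> 'a \<Rightarrow> real) \<Rightarrow> bool" where
  "focal A \<mu> b \<mu>' b' \<longleftrightarrow> eqm A \<mu>' b' \<and> (\<forall>\<theta>\<in>supp_prof \<mu>. b' \<theta> = b \<theta>)"

definition stable :: "('i::finite \<Rightarrow> 'a set) \<Rightarrow> ('i \<Rightarrow> ('i \<Rightarrow> 'a) \<Rightarrow> real)
    \<Rightarrow> ('i \<Rightarrow> (('i \<Rightarrow> 'a) \<Rightarrow> real) \<Rightarrow> real)
    \<Rightarrow> (('i \<Rightarrow> ('i \<Rightarrow> 'a) \<Rightarrow> real) \<Rightarrow> 'i \<Rightarrow> 'a \<Rightarrow> real) \<Rightarrow> bool" where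
  "stable A \<pi> \<mu> b \<longleftrightarrow> balanced A \<pi> \<mu> b \<and>
    (\<forall>J. J \<noteq> {} \<longrightarrow>
      (\<forall>mt. (\<forall>j\<in>J. mt j \<in> types A - supp (\<mu> j)) \<longrightarrow>
        (\<exists>eb. 0 < eb \<and> eb < 1 \<and>
          (\<forall>\<epsilon>. (\<forall>j\<in>J. 0 < \<epsilon> j \<and> \<epsilon> j < 1) \<longrightarrow> Max (\<epsilon> ` J) < eb \<longrightarrow>
            (\<forall>b'. focal A \<mu> b (post_entry \<mu> J mt \<epsilon>) b' \<longrightarrow>
               (\<exists>j\<in>J. \<forall>t\<in>supp (\<mu> j).
                  avg_fit A \<pi> (post_entry \<mu> J mt \<epsilon>) b' j t
                    > avg_fit A \<pi> (post_entry \<mu> J mt \<epsilon>) b' j (mt j))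
               \<or> balanced A \<pi> (post_entry \<mu> J mt \<epsilon>) b')))))"

definition pareto_dominates :: "('i::finite \<Rightarrow> 'a set) \<Rightarrow> ('i \<Rightarrow> ('i \<Rightarrow> 'a) \<Rightarrow> real)
    \<Rightarrow> ('i \<Rightarrow> 'a \<Rightarrow> real) \<Rightarrow> ('i \<Rightarrow> 'a \<Rightarrow> real) \<Rightarrow> bool" where
  "pareto_dominates A \<pi> \<sigma> \<sigma>' \<longleftrightarrow>
     (\<forall>i. mexp A (\<pi> i) \<sigma>' \<le> mexp A (\<pi> i) \<sigma>) \<and> (\<exists>i. mexp A (\<pi> i) \<sigma>' < mexp A (\<pi> i) \<sigma>)"

definition pareto_efficient :: "('i::finite \<Rightarrow> 'a set) \<Rightarrow> ('i \<Rightarrow> ('i \<Rightarrow> 'a) \<Rightarrow> real)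
    \<Rightarrow> ('i \<Rightarrow> 'a \<Rightarrow> real) \<Rightarrow> bool" where
  "pareto_efficient A \<pi> \<sigma> \<longleftrightarrow>
     mixed_profile A \<sigma> \<and> \<not> (\<exists>\<sigma>'. mixed_profile A \<sigma>' \<and> pareto_dominates A \<pi> \<sigma>' \<sigma>)"

end

theory Submission
  imports Defs
begin

definition cty :: "('i \<Rightarrow> 'a set) \<Rightarrow> real \<Rightarrow> ('i \<Rightarrow> 'a) \<Rightarrow> real" where
  "cty A c = (\<lambda>a. if a \<in> profiles A then c else 0)"

lemma sum_mixed:
  fixes A :: "'i::finite \<Rightarrow> 'a set"
  assumes "\<And>i. finite (A i)" "mixed_profile A \<sigma>"
  shows "(\<Sum>a\<in>profiles A. \<Prod>i\<in>UNIV. \<sigma> i (a i)) = 1"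
proof -
  have "(\<Prod>i\<in>UNIV. \<Sum>x\<in>A i. \<sigma> i x) = (\<Sum>a\<in>profiles A. \<Prod>i\<in>UNIV. \<sigma> i (a i))"
    unfolding profiles_def by (rule prod_sum_PiE) (auto simp: assms)
  moreover have "(\<Prod>i\<in>UNIV. \<Sum>x\<in>A i. \<sigma> i x) = 1"
    using assms(2) by (simp add: mixed_profile_def is_mixed_def)
  ultimately show ?thesis by simp
qed

lemma mexp_cty:
  fixes A :: "'i::finite \<Rightarrow> 'a set"
  assumes "\<And>i. finite (A i)" "mixed_profile A \<sigma>"
  shows "mexp A (cty A c) \<sigma> = c"
proof -
  have "mexp A (cty A c) \<sigma> = (\<Sum>a\<in>profiles A. (\<Prod>i\<in>UNIV. \<sigma> i (a i)) * c)"
    unfolding mexp_def cty_def by (rule sum.cong) auto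
  also have "\<dots> = (\<Sum>a\<in>profiles A. \<Prod>i\<in>UNIV. \<sigma> i (a i)) * c"
    by (simp add: sum_distrib_right)
  finally show ?thesis using sum_mixed[OF assms] by simp
qed

lemma mixed_upd:
  "mixed_profile A \<sigma> \<Longrightarrow> is_mixed (A i) s \<Longrightarrow> mixed_profile A (\<sigma>(i := s))"
  by (simp add: mixed_profile_def)

lemma cty_inj:
  assumes "profiles A \<noteq> {}"
  shows "inj (cty A)"
proof
  fix c d assume h: "cty A c = cty A d"
  obtain a where "a \<in> profiles A" using assms by blast
  then show "c = d" using fun_cong[OF h, of a] by (simp add: cty_def)
qed

theorem mainTheorem1:
  fixes A :: "'i::finite \<Rightarrow> 'a set"
    and \<pi> :: "'i \<Rightarrow> ('i \<Rightarrow> 'a) \<Rightarrow> real"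
    and \<mu> :: "'i \<Rightarrow> (('i \<Rightarrow> 'a) \<Rightarrow> real) \<Rightarrow> real"
    and b :: "('i \<Rightarrow> ('i \<Rightarrow> 'a) \<Rightarrow> real) \<Rightarrow> 'i \<Rightarrow> 'a \<Rightarrow> real"
  assumes fin: "\<And>i. finite (A i)"
    and ne: "\<And>i. A i \<noteq> {}"
    and dist: "pop_dist A \<mu>"
    and eq: "eqm A \<mu> b"
    and st: "stable A \<pi> \<mu> b"
  shows "\<forall>\<theta>\<in>supp_prof \<mu>. pareto_efficient A \<pi> (b \<theta>)"
proof
  fix \<theta> assume \<theta>: "\<theta> \<in> supp_prof \<mu>"
  have \<theta>j: "\<And>j. \<theta> j \<in> supp (\<mu> j)" using \<theta> by (auto simp: supp_prof_def PiE_UNIV_domain)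
  have mixb: "mixed_profile A (b \<theta>)" using eq \<theta> by (auto simp: eqm_def nash_def)
  have munn: "\<And>j t. 0 \<le> \<mu> j t" using dist by (simp add: pop_dist_def is_dist_def)
  have mufin: "\<And>j. finite (supp (\<mu> j))" using dist by (simp add: pop_dist_def is_dist_def)
  show "pareto_efficient A \<pi> (b \<theta>)"
  proof (rule ccontr)
    assume "\<not> ?thesis"
    then obtain \<sigma>' where mix': "mixed_profile A \<sigma>'" and dom: "pareto_dominates A \<pi> \<sigma>' (b \<theta>)"
      using mixb unfolding pareto_efficient_def by blast
    then obtain i0 where i0: "mexp A (\<pi> i0) (b \<theta>) < mexp A (\<pi> i0) \<sigma>'"
      and ge: "\<And>i. mexp A (\<pi> i) (b \<theta>) \<le> mexp A (\<pi> i) \<sigma>'"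
      unfolding pareto_dominates_def by blast
    have pne: "profiles A \<noteq> {}" using ne by (simp add: profiles_def PiE_eq_empty_iff)
    have finS: "finite (\<Union>j. cty A -` supp (\<mu> j))"
      using mufin cty_inj[OF pne] by (auto intro: finite_vimageI)
    obtain c where c: "c \<notin> (\<Union>j. cty A -` supp (\<mu> j))"
      using ex_new_if_finite[OF infinite_UNIV_char_0 finS] by blast
    define mt where "mt = (\<lambda>j::'i. cty A c)"
    have mtns: "\<And>j. mt j \<notin> supp (\<mu> j)" using c by (auto simp: mt_def)
    have mt_types: "\<forall>j\<in>UNIV. mt j \<in> types A - supp (\<mu> j)"
      using mtns by (auto simp: types_def mt_def cty_def)
    have "\<exists>eb. 0 < eb \<and> eb < 1 \<and>
          (\<forall>\<epsilon>. (\<forall>j\<in>UNIV. 0 < \<epsilon> j \<and> \<epsilon> j < 1) \<longrightarrow> Max (\<epsilon> ` UNIV) < eb \<longrightarrow>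
            (\<forall>b'. focal A \<mu> b (post_entry \<mu> UNIV mt \<epsilon>) b' \<longrightarrow>
               (\<exists>j\<in>UNIV. \<forall>t\<in>supp (\<mu> j).
                  avg_fit A \<pi> (post_entry \<mu> UNIV mt \<epsilon>) b' j t
                    > avg_fit A \<pi> (post_entry \<mu> UNIV mt \<epsilon>) b' j (mt j))
               \<or> balanced A \<pi> (post_entry \<mu> UNIV mt \<epsilon>) b'))"
      using st mt_types unfolding stable_def by blast
    then obtain eb where eb: "0 < eb" "eb < 1" and H: "\<forall>\<epsilon>. (\<forall>j\<in>UNIV. 0 < \<epsilon> j \<and> \<epsilon> j < 1) \<longrightarrow> Max (\<epsilon> ` UNIV) < eb \<longrightarrow>
            (\<forall>b'. focal A \<mu> b (post_entry \<mu> UNIV mt \<epsilon>) b' \<longrightarrow>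
               (\<exists>j\<in>UNIV. \<forall>t\<in>supp (\<mu> j).
                  avg_fit A \<pi> (post_entry \<mu> UNIV mt \<epsilon>) b' j t
                    > avg_fit A \<pi> (post_entry \<mu> UNIV mt \<epsilon>) b' j (mt j))
               \<or> balanced A \<pi> (post_entry \<mu> UNIV mt \<epsilon>) b')" by blast
    define e where "e = eb / 2"
    have e: "0 < e" "e < 1" "e < eb" using eb by (auto simp: e_def)
    define \<epsilon> where "\<epsilon> = (\<lambda>j::'i. e)"
    define \<mu>' where "\<mu>' = post_entry \<mu> UNIV mt \<epsilon>"
    have mu'_eq: "\<And>j t. \<mu>' j t = (1 - e) * \<mu> j t + e * (if t = mt j then 1 else 0)"
      by (simp add: \<mu>'_def post_entry_def \<epsilon>_def)
    have mu_mt: "\<And>j. \<mu> j (mt j) = 0" using mtns munn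
      by (metis less_eq_real_def mem_Collect_eq supp_def)
    have mu'_mt: "\<And>j. \<mu>' j (mt j) = e" by (simp add: mu'_eq mu_mt)
    have mu'nn: "\<And>j t. 0 \<le> \<mu>' j t" using munn e by (simp add: mu'_eq)
    have supp': "\<And>j. supp (\<mu>' j) = insert (mt j) (supp (\<mu> j))"
    proof (intro set_eqI)
      fix j t
      show "t \<in> supp (\<mu>' j) \<longleftrightarrow> t \<in> insert (mt j) (supp (\<mu> j))"
      proof (cases "t = mt j")
        case True then show ?thesis using e by (simp add: supp_def mu'_mt)
      next
        case False then show ?thesis using e
          by (simp add: supp_def mu'_eq zero_less_mult_iff)
      qed
    qed
    have mu'fin: "\<And>j. finite (supp (\<mu>' j))" using mufin by (simp add: supp')
    define R where "R = (\<lambda>\<theta>'::'i \<Rightarrow> (('i \<Rightarrow> 'a) \<Rightarrow> real). \<lambda>j. if \<theta>' j = mt j then \<theta> j else \<theta>' j)"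
    define b' where "b' = (\<lambda>\<theta>'. if (\<forall>j. \<theta>' j = mt j) then \<sigma>' else b (R \<theta>'))"
    have focal: "focal A \<mu> b \<mu>' b'"
      unfolding focal_def
    proof
      show "eqm A \<mu>' b'"
        unfolding eqm_def
      proof
        fix \<theta>'' assume h: "\<theta>'' \<in> supp_prof \<mu>'"
        have h': "\<And>j. \<theta>'' j = mt j \<or> \<theta>'' j \<in> supp (\<mu> j)"
          using h by (auto simp: supp_prof_def PiE_UNIV_domain supp')
        show "nash A \<theta>'' (b' \<theta>'')"
        proof (cases "\<forall>j. \<theta>'' j = mt j")
          case True
          then show ?thesis using mix'
            by (simp add: b'_def nash_def mt_def mexp_cty[OF fin] mixed_upd)
        next
          case False
          have Rin: "R \<theta>'' \<in> supp_prof \<mu>"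
            using h' \<theta>j unfolding supp_prof_def PiE_UNIV_domain R_def by (auto; metis)
          have n: "nash A (R \<theta>'') (b (R \<theta>''))" using eq Rin by (simp add: eqm_def)
          have bb: "b' \<theta>'' = b (R \<theta>'')" using False unfolding b'_def by auto
          show ?thesis unfolding bb nash_def
          proof (intro conjI allI impI)
            show mp: "mixed_profile A (b (R \<theta>''))" using n by (simp add: nash_def)
            fix i s assume s: "is_mixed (A i) s"
            show "mexp A (\<theta>'' i) ((b (R \<theta>''))(i := s)) \<le> mexp A (\<theta>'' i) (b (R \<theta>''))"
            proof (cases "\<theta>'' i = mt i")
              case True
              then show ?thesis using mp s
                by (simp add: mt_def mexp_cty[OF fin] mixed_upd)
            next
              case False
              then have "R \<theta>'' i = \<theta>'' i" by (simp add: R_def)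
              then show ?thesis using n s unfolding nash_def by metis
            qed
          qed
        qed
      qed
      show "\<forall>\<theta>\<in>supp_prof \<mu>. b' \<theta> = b \<theta>"
      proof
        fix \<theta>'' assume h: "\<theta>'' \<in> supp_prof \<mu>"
        have h': "\<And>j. \<theta>'' j \<in> supp (\<mu> j)"
          using h by (auto simp: supp_prof_def PiE_UNIV_domain)
        have ne': "\<And>j. \<theta>'' j \<noteq> mt j" using h' mtns by metis
        have "R \<theta>'' = \<theta>''" using ne' by (simp add: R_def)
        then show "b' \<theta>'' = b \<theta>''" using ne' by (simp add: b'_def)
      qed
    qed
    define d where "d = (\<lambda>i. mexp A (\<pi> i) \<sigma>' - mexp A (\<pi> i) (b \<theta>))"
    have key: "avg_fit A \<pi> \<mu>' b' i (mt i) - avg_fit A \<pi> \<mu>' b' i (\<theta> i) =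
       (\<Sum>\<theta>'\<in>PiE UNIV (\<lambda>j. if j = i then {\<theta> i} else supp (\<mu>' j)).
          (\<Prod>j\<in>UNIV - {i}. \<mu>' j (\<theta>' j)) * (if (\<forall>j. j \<noteq> i \<longrightarrow> \<theta>' j = mt j) then d i else 0))"
      for i
    proof -
      define S where "S = PiE UNIV (\<lambda>j. if j = i then {\<theta> i} else supp (\<mu>' j))"
      define w where "w = (\<lambda>\<theta>'. \<Prod>j\<in>UNIV - {i}. \<mu>' j (\<theta>' j))"
      have Smt: "PiE UNIV (\<lambda>j. if j = i then {mt i} else supp (\<mu>' j)) = (\<lambda>\<theta>'. \<theta>'(i := mt i)) ` S"
      proof (intro set_eqI iffI)
        fix f assume f: "f \<in> PiE UNIV (\<lambda>j. if j = i then {mt i} else supp (\<mu>' j))"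
        have "f(i := \<theta> i) \<in> S" using f unfolding S_def PiE_UNIV_domain Pi_iff by (auto; metis)
        moreover have "f i = mt i" using f unfolding PiE_UNIV_domain Pi_iff by (metis singletonD UNIV_I)
        then have "f = (f(i := \<theta> i))(i := mt i)" by auto
        ultimately show "f \<in> (\<lambda>\<theta>'. \<theta>'(i := mt i)) ` S" by blast
      next
        fix f assume "f \<in> (\<lambda>\<theta>'. \<theta>'(i := mt i)) ` S"
        then show "f \<in> PiE UNIV (\<lambda>j. if j = i then {mt i} else supp (\<mu>' j))"
          by (auto simp: S_def PiE_UNIV_domain Pi_iff split: if_splits)
      qed
      have inj: "inj_on (\<lambda>\<theta>'. \<theta>'(i := mt i)) S"
      proof (rule inj_onI)
        fix x y assume x: "x \<in> S" and y: "y \<in> S" and xy: "x(i := mt i) = y(i := mt i)"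
        show "x = y"
        proof
          fix j show "x j = y j"
            using x y fun_cong[OF xy, of j] by (cases "j = i") (auto simp: S_def PiE_UNIV_domain Pi_iff split: if_splits)
        qed
      qed
      have w_upd: "w (\<theta>'(i := mt i)) = w \<theta>'" for \<theta>'
        unfolding w_def by (rule prod.cong) auto
      have a1: "avg_fit A \<pi> \<mu>' b' i (mt i) = (\<Sum>\<theta>'\<in>S. w \<theta>' * mexp A (\<pi> i) (b' (\<theta>'(i := mt i))))"
        unfolding avg_fit_def Smt w_def[symmetric]
        by (simp add: sum.reindex[OF inj] w_upd[unfolded w_def] w_def)
      have a2: "avg_fit A \<pi> \<mu>' b' i (\<theta> i) = (\<Sum>\<theta>'\<in>S. w \<theta>' * mexp A (\<pi> i) (b' \<theta>'))"
        unfolding avg_fit_def S_def w_def by simp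
      have pt: "w \<theta>' * mexp A (\<pi> i) (b' (\<theta>'(i := mt i))) - w \<theta>' * mexp A (\<pi> i) (b' \<theta>')
          = w \<theta>' * (if (\<forall>j. j \<noteq> i \<longrightarrow> \<theta>' j = mt j) then d i else 0)" if t: "\<theta>' \<in> S" for \<theta>'
      proof -
        have ti: "\<theta>' i = \<theta> i" using t by (auto simp: S_def PiE_UNIV_domain Pi_iff split: if_splits)
        have tne: "\<theta>' i \<noteq> mt i" using ti \<theta>j mtns by metis
        show ?thesis
        proof (cases "\<forall>j. j \<noteq> i \<longrightarrow> \<theta>' j = mt j")
          case True
          have all: "\<forall>j. (\<theta>'(i := mt i)) j = mt j" using True by auto
          have "R \<theta>' = \<theta>"
          proof
            fix j show "R \<theta>' j = \<theta> j" using True ti tne by (cases "j = i") (auto simp: R_def)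
          qed
          then have "b' \<theta>' = b \<theta>" using tne by (auto simp: b'_def)
          moreover have "b' (\<theta>'(i := mt i)) = \<sigma>'" using all by (simp add: b'_def)
          ultimately show ?thesis using True by (simp add: d_def algebra_simps)
        next
          case False
          then obtain k where k: "k \<noteq> i" "\<theta>' k \<noteq> mt k" by blast
          have n1: "\<not> (\<forall>j. (\<theta>'(i := mt i)) j = mt j)" using k by auto
          have n2: "\<not> (\<forall>j. \<theta>' j = mt j)" using k by auto
          have "R (\<theta>'(i := mt i)) = R \<theta>'"
          proof
            fix j show "R (\<theta>'(i := mt i)) j = R \<theta>' j" using ti tne by (cases "j = i") (auto simp: R_def)
          qed
          moreover have "b' (\<theta>'(i := mt i)) = b (R (\<theta>'(i := mt i)))" using n1 unfolding b'_def by (rule if_not_P)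
          moreover have "b' \<theta>' = b (R \<theta>')" using n2 unfolding b'_def by (rule if_not_P)
          ultimately show ?thesis using False by auto
        qed
      qed
      have "avg_fit A \<pi> \<mu>' b' i (mt i) - avg_fit A \<pi> \<mu>' b' i (\<theta> i) =
         (\<Sum>\<theta>'\<in>S. w \<theta>' * (if (\<forall>j. j \<noteq> i \<longrightarrow> \<theta>' j = mt j) then d i else 0))"
        unfolding a1 a2 sum_subtractf[symmetric] by (rule sum.cong[OF refl pt])
      then show ?thesis unfolding S_def w_def .
    qed
    have Sfin: "finite (PiE UNIV (\<lambda>j. if j = i then {\<theta> i} else supp (\<mu>' j)))" for i
      by (rule finite_PiE) (auto simp: mu'fin)
    have dnn: "0 \<le> d i" for i using ge[of i] by (simp add: d_def)
    have geq: "avg_fit A \<pi> \<mu>' b' i (\<theta> i) \<le> avg_fit A \<pi> \<mu>' b' i (mt i)" for i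
    proof -
      have "0 \<le> avg_fit A \<pi> \<mu>' b' i (mt i) - avg_fit A \<pi> \<mu>' b' i (\<theta> i)"
        unfolding key using mu'nn dnn
        by (intro sum_nonneg mult_nonneg_nonneg prod_nonneg) auto
      then show ?thesis by simp
    qed
    have strict: "avg_fit A \<pi> \<mu>' b' i0 (\<theta> i0) < avg_fit A \<pi> \<mu>' b' i0 (mt i0)"
    proof -
      define ts where "ts = (\<lambda>j. if j = i0 then \<theta> i0 else mt j)"
      have tsin: "ts \<in> PiE UNIV (\<lambda>j. if j = i0 then {\<theta> i0} else supp (\<mu>' j))"
        by (auto simp: ts_def PiE_UNIV_domain supp')
      have "0 < (\<Prod>j\<in>UNIV - {i0}. \<mu>' j (ts j)) * (if (\<forall>j. j \<noteq> i0 \<longrightarrow> ts j = mt j) then d i0 else 0)"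
        using e i0 by (auto simp: ts_def mu'_mt d_def intro!: prod_pos)
      then have "0 < avg_fit A \<pi> \<mu>' b' i0 (mt i0) - avg_fit A \<pi> \<mu>' b' i0 (\<theta> i0)"
        unfolding key using mu'nn dnn Sfin tsin
        by (intro sum_pos2[where i = ts]) (auto intro!: mult_nonneg_nonneg prod_nonneg)
      then show ?thesis by simp
    qed
    have "(\<exists>j\<in>UNIV. \<forall>t\<in>supp (\<mu> j). avg_fit A \<pi> \<mu>' b' j t > avg_fit A \<pi> \<mu>' b' j (mt j))
          \<or> balanced A \<pi> \<mu>' b'"
      using H e focal unfolding \<mu>'_def by (auto simp: \<epsilon>_def)
    then show False
    proof
      assume "\<exists>j\<in>UNIV. \<forall>t\<in>supp (\<mu> j). avg_fit A \<pi> \<mu>' b' j t > avg_fit A \<pi> \<mu>' b' j (mt j)"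
      then obtain j where "\<forall>t\<in>supp (\<mu> j). avg_fit A \<pi> \<mu>' b' j t > avg_fit A \<pi> \<mu>' b' j (mt j)" by blast
      then show False using \<theta>j[of j] geq[of j] by fastforce
    next
      assume "balanced A \<pi> \<mu>' b'"
      then have "avg_fit A \<pi> \<mu>' b' i0 (\<theta> i0) = avg_fit A \<pi> \<mu>' b' i0 (mt i0)"
        using \<theta>j[of i0] unfolding balanced_def supp' by blast
      then show False using strict by simp
    qed
  qed
qed

end
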